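(* Let $G$ be an infinite finitely generated residually finite group, $S$ a finite symmetric generating set, and $(X_n)_{n\ge0}$ the lazy random walk on $\mathrm{Cay}(G,S)$. If $\sum_{k\ge2}\frac{1}{[G:\Lambda_k]}$ diverges, then $\lim_{n\to\infty}\mathbb{E}[D_G(X_n)]=\infty$.
   Context: For $g\ne e$, $D_G(g)=\min\{[G:N]: N\lhd G\text{ of finite index},\ g\notin N\}$, and $D_G(e)=0$. For $k\ge2$, $\Lambda_k$ is the intersection of all normal subgroups of $G$ of index at most $k$. The lazy random walk on $\mathrm{Cay}(G,S)$ is the Markov chain with $X_0=e$ and transition matrix $\frac12 I+\frac12P$, where $P(x,y)=\frac1{|S|}\#\{s\in S:y=xs\}$. *)

theory Defs
  imports "HOL-Algebra.Algebra" "HOL-Probability.Probability"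
begin

definition grp_index :: "('a, 'b) monoid_scheme \<Rightarrow> 'a set \<Rightarrow> nat" where
  "grp_index G N = card (rcosets\<^bsub>G\<^esub> N)"

definition fin_index_normal :: "('a, 'b) monoid_scheme \<Rightarrow> 'a set \<Rightarrow> bool" where
  "fin_index_normal G N \<longleftrightarrow> N \<lhd> G \<and> finite (rcosets\<^bsub>G\<^esub> N)"

definition residually_finite :: "('a, 'b) monoid_scheme \<Rightarrow> bool" where
  "residually_finite G \<longleftrightarrow>
     (\<forall>g \<in> carrier G. g \<noteq> \<one>\<^bsub>G\<^esub> \<longrightarrow> (\<exists>N. fin_index_normal G N \<and> g \<notin> N))"

definition depth :: "('a, 'b) monoid_scheme \<Rightarrow> 'a \<Rightarrow> nat" where
  "depth G g = (if g = \<one>\<^bsub>G\<^esub> then 0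
     else (LEAST m. \<exists>N. fin_index_normal G N \<and> g \<notin> N \<and> grp_index G N = m))"

definition Lambda :: "('a, 'b) monoid_scheme \<Rightarrow> nat \<Rightarrow> 'a set" where
  "Lambda G k = \<Inter> {N. fin_index_normal G N \<and> grp_index G N \<le> k}"

definition lazy_step :: "('a, 'b) monoid_scheme \<Rightarrow> 'a set \<Rightarrow> 'a \<Rightarrow> 'a pmf" where
  "lazy_step G S x = bind_pmf (bernoulli_pmf (1/2))
     (\<lambda>b. if b then return_pmf x else map_pmf (\<lambda>s. x \<otimes>\<^bsub>G\<^esub> s) (pmf_of_set S))"

primrec lazy_walk :: "('a, 'b) monoid_scheme \<Rightarrow> 'a set \<Rightarrow> nat \<Rightarrow> 'a pmf" where
  "lazy_walk G S 0 = return_pmf \<one>\<^bsub>G\<^esub>"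
| "lazy_walk G S (Suc n) = bind_pmf (lazy_walk G S n) (lazy_step G S)"

end

theory Submission
  imports Defs
begin


lemma prob_bind_pmf:
  "measure_pmf.prob (bind_pmf M f) A = measure_pmf.expectation M (\<lambda>x. measure_pmf.prob (f x) A)"
proof -
  have "ennreal (measure_pmf.prob (bind_pmf M f) A) = emeasure (bind_pmf M f) A"
    by (simp add: measure_pmf.emeasure_eq_measure)
  also have "\<dots> = (\<integral>\<^sup>+x. ennreal (measure_pmf.prob (f x) A) \<partial>M)"
    using emeasure_bind_pmf[of M f A] by (simp add: measure_pmf.emeasure_eq_measure)
  also have "\<dots> = ennreal (measure_pmf.expectation M (\<lambda>x. measure_pmf.prob (f x) A))"
    by (intro nn_integral_eq_integral measure_pmf.integrable_const_bound[where B=1]) auto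
  finally show ?thesis by (simp add: ennreal_inj integral_nonneg_AE)
qed

lemma expectation_finite_sum:
  fixes f :: "'a \<Rightarrow> real"
  assumes "finite A" "set_pmf p \<subseteq> A"
  shows "measure_pmf.expectation p f = (\<Sum>x\<in>A. pmf p x * f x)"
  using assms by (subst integral_measure_pmf[of A]) auto

lemma prob_finite_sum:
  assumes "finite A" "set_pmf p \<subseteq> A"
  shows "measure_pmf.prob p B = (\<Sum>x\<in>A. pmf p x * indicator B x)"
  using expectation_finite_sum[OF assms, of "indicator B"] by simp

definition walkT :: "('a, 'b) monoid_scheme \<Rightarrow> 'a set \<Rightarrow> ('a \<Rightarrow> real) \<Rightarrow> 'a \<Rightarrow> real" where
  "walkT G S f g = (f g + (\<Sum>s\<in>S. f (g \<otimes>\<^bsub>G\<^esub> s)) / card S) / 2"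

locale walk = group G for G :: "('a, 'b) monoid_scheme" (structure) +
  fixes S :: "'a set"
  assumes finS: "finite S" and SG: "S \<subseteq> carrier G" and Sne: "S \<noteq> {}"
    and Ssym: "\<forall>s\<in>S. inv s \<in> S"
    and gen: "generate G S = carrier G"
begin

lemma cardS: "card S > 0" using finS Sne by (simp add: card_gt_0_iff)

lemma set_step: "set_pmf (lazy_step G S x) \<subseteq> insert x ((\<lambda>s. x \<otimes> s) ` S)"
proof -
  have "set_pmf (pmf_of_set S) = S" using Sne finS by simp
  then show ?thesis unfolding lazy_step_def by (auto split: if_splits)
qed

lemma walk_support: "set_pmf (lazy_walk G S n) \<subseteq> carrier G \<and> finite (set_pmf (lazy_walk G S n))"
proof (induction n)
  case 0 then show ?case by simp
next
  case (Suc n)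
  have sub: "set_pmf (lazy_step G S x) \<subseteq> carrier G" if "x \<in> carrier G" for x
    using set_step[of x] that SG by auto
  have fin: "finite (set_pmf (lazy_step G S x))" for x
    using set_step[of x] finS by (meson finite_imageI finite_insert finite_subset)
  show ?case using Suc sub fin by auto
qed

lemma prob_step:
  "measure_pmf.prob (lazy_step G S x) A = (indicator A x + card {s\<in>S. x \<otimes> s \<in> A} / card S) / 2"
proof -
  have "S \<inter> (\<lambda>s. x \<otimes> s) -` A = {s\<in>S. x \<otimes> s \<in> A}" by auto
  then show ?thesis
    unfolding lazy_step_def prob_bind_pmf using finS Sne
    by (simp add: measure_pmf_of_set)
qed

lemma coset_shift:
  assumes N: "subgroup N G" and x: "x \<in> carrier G" and g: "g \<in> carrier G" and s: "s \<in> carrier G"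
  shows "(x \<otimes> s \<in> N #> g) \<longleftrightarrow> (x \<in> N #> (g \<otimes> inv s))"
proof -
  have "(x \<otimes> s \<in> N #> g) \<longleftrightarrow> (x \<otimes> s \<otimes> inv g \<in> N)"
    using subgroup.rcos_module[OF N is_group g] x s by simp
  moreover have "(x \<in> N #> (g \<otimes> inv s)) \<longleftrightarrow> (x \<otimes> inv (g \<otimes> inv s) \<in> N)"
    using subgroup.rcos_module[OF N is_group] x s g by simp
  moreover have "x \<otimes> inv (g \<otimes> inv s) = x \<otimes> s \<otimes> inv g"
    using x s g by (simp add: inv_mult_group m_assoc)
  ultimately show ?thesis by simp
qed

lemma sum_inv_reindex:
  fixes f :: "'a \<Rightarrow> real"
  shows "(\<Sum>s\<in>S. f (inv s)) = (\<Sum>s\<in>S. f s)"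
proof (rule sum.reindex_bij_witness[where i = "\<lambda>s. inv s" and j = "\<lambda>s. inv s"])
  fix s assume "s \<in> S"
  then show "inv (inv s) = s" "inv s \<in> S" using SG Ssym by auto
qed (use SG Ssym in auto)

lemma walk_rec:
  assumes N: "subgroup N G" and g: "g \<in> carrier G"
  shows "measure_pmf.prob (lazy_walk G S (Suc n)) (N #> g)
       = walkT G S (\<lambda>h. measure_pmf.prob (lazy_walk G S n) (N #> h)) g"
proof -
  let ?p = "lazy_walk G S n"
  let ?F = "set_pmf ?p"
  have F: "?F \<subseteq> carrier G" "finite ?F" using walk_support by auto
  have cardeq: "real (card {s\<in>S. x \<otimes> s \<in> N #> g}) = (\<Sum>s\<in>S. indicator (N #> (g \<otimes> inv s)) x)"
    if x: "x \<in> carrier G" for x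
  proof -
    have "{s\<in>S. x \<otimes> s \<in> N #> g} = S \<inter> {s. x \<in> N #> (g \<otimes> inv s)}"
      using coset_shift[OF N x g] SG by auto
    then show ?thesis using finS by (simp add: indicator_def of_bool_def[symmetric])
  qed
  have "measure_pmf.prob (lazy_walk G S (Suc n)) (N #> g)
      = (\<Sum>x\<in>?F. pmf ?p x * measure_pmf.prob (lazy_step G S x) (N #> g))"
    by (simp add: prob_bind_pmf expectation_finite_sum[OF F(2)])
  also have "\<dots> = (\<Sum>x\<in>?F. pmf ?p x * ((indicator (N #> g) x
        + (\<Sum>s\<in>S. indicator (N #> (g \<otimes> inv s)) x) / card S) / 2))"
    using F cardeq by (intro sum.cong refl) (auto simp: prob_step)
  also have "\<dots> = ((\<Sum>x\<in>?F. pmf ?p x * indicator (N #> g) x)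
        + (\<Sum>s\<in>S. \<Sum>x\<in>?F. pmf ?p x * indicator (N #> (g \<otimes> inv s)) x) / card S) / 2"
    by (simp add: sum_distrib_left ring_distribs sum_divide_distrib sum.distrib add_divide_distrib
        sum.swap[of _ S] mult.assoc)
  also have "\<dots> = walkT G S (\<lambda>h. measure_pmf.prob ?p (N #> h)) g"
    using sum_inv_reindex[of "\<lambda>s. measure_pmf.prob ?p (N #> (g \<otimes> s))"]
    by (simp add: walkT_def prob_finite_sum[OF F(2) order_refl])
  finally show ?thesis .
qed

end



primrec words :: "('a, 'b) monoid_scheme \<Rightarrow> 'a set \<Rightarrow> nat \<Rightarrow> 'a set" where
  "words G S 0 = {\<one>\<^bsub>G\<^esub>}"
| "words G S (Suc j) = words G S j \<union> {s \<otimes>\<^bsub>G\<^esub> w | s w. s \<in> S \<and> w \<in> words G S j}"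

context walk begin

abbreviation T where "T \<equiv> walkT G S"

lemma T_cong: "(\<And>x. x \<in> carrier G \<Longrightarrow> f x = f' x) \<Longrightarrow> g \<in> carrier G \<Longrightarrow> T f g = T f' g"
  unfolding walkT_def using SG by (auto intro!: sum.cong)

lemma T_lower:
  assumes "\<And>x. x \<in> carrier G \<Longrightarrow> a \<le> f x" "g \<in> carrier G"
  shows "a \<le> T f g"
proof -
  have "(\<Sum>s\<in>S. a) \<le> (\<Sum>s\<in>S. f (g \<otimes> s))" using assms SG by (intro sum_mono) auto
  then have "a \<le> (\<Sum>s\<in>S. f (g \<otimes> s)) / card S" using cardS by (simp add: field_simps)
  moreover have "a \<le> f g" using assms by blast
  ultimately show ?thesis unfolding walkT_def by simp
qed

lemma T_upper:
  assumes "\<And>x. x \<in> carrier G \<Longrightarrow> f x \<le> b" "g \<in> carrier G"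
  shows "T f g \<le> b"
proof -
  have "(\<Sum>s\<in>S. f (g \<otimes> s)) \<le> (\<Sum>s\<in>S. b)" using assms SG by (intro sum_mono) auto
  then have "(\<Sum>s\<in>S. f (g \<otimes> s)) / card S \<le> b" using cardS by (simp add: field_simps)
  moreover have "f g \<le> b" using assms by blast
  ultimately show ?thesis unfolding walkT_def by simp
qed

lemma Tpow_bounds:
  assumes "\<And>x. x \<in> carrier G \<Longrightarrow> a \<le> f x \<and> f x \<le> b" "g \<in> carrier G"
  shows "a \<le> (T ^^ j) f g \<and> (T ^^ j) f g \<le> b"
  using assms(2)
proof (induction j arbitrary: g)
  case 0 then show ?case using assms by simp
next
  case (Suc j)
  then show ?case using T_lower[of a "(T ^^ j) f" g] T_upper[of "(T ^^ j) f" b g] by simp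
qed

lemma T_shift: "T (\<lambda>x. f x + a) = (\<lambda>x. T f x + a)"
  using cardS by (auto simp: walkT_def sum.distrib field_simps)

lemma T_neg: "T (\<lambda>x. a - f x) = (\<lambda>x. a - T f x)"
  using cardS by (auto simp: walkT_def sum_subtractf field_simps)

lemma Tpow_shift: "(T ^^ j) (\<lambda>x. f x + a) = (\<lambda>x. (T ^^ j) f x + a)"
  by (induction j) (simp_all add: T_shift)

lemma Tpow_neg: "(T ^^ j) (\<lambda>x. a - f x) = (\<lambda>x. a - (T ^^ j) f x)"
  by (induction j) (simp_all add: T_neg)

definition invar :: "'a set \<Rightarrow> ('a \<Rightarrow> real) \<Rightarrow> bool" where
  "invar N f \<longleftrightarrow> (\<forall>n\<in>N. \<forall>x\<in>carrier G. f (n \<otimes> x) = f x)"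

lemma T_invar:
  assumes N: "subgroup N G" and inv: "invar N f"
  shows "invar N (T f)"
  unfolding invar_def
proof (intro ballI)
  fix n x assume n: "n \<in> N" and x: "x \<in> carrier G"
  have nG: "n \<in> carrier G" using subgroup.mem_carrier[OF N n] .
  have "f (n \<otimes> x \<otimes> s) = f (x \<otimes> s)" if s: "s \<in> S" for s
  proof -
    have sG: "s \<in> carrier G" using s SG by blast
    have "n \<otimes> x \<otimes> s = n \<otimes> (x \<otimes> s)" using nG x sG by (rule m_assoc)
    moreover have "x \<otimes> s \<in> carrier G" using x sG by (rule m_closed)
    ultimately show ?thesis using inv n unfolding invar_def by simp
  qed
  then have "(\<Sum>s\<in>S. f (n \<otimes> x \<otimes> s)) = (\<Sum>s\<in>S. f (x \<otimes> s))" by (rule sum.cong[OF refl])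
  moreover have "f (n \<otimes> x) = f x" using inv n x unfolding invar_def by blast
  ultimately show "T f (n \<otimes> x) = T f x" unfolding walkT_def by simp
qed

lemma Tpow_invar: "subgroup N G \<Longrightarrow> invar N f \<Longrightarrow> invar N ((T ^^ j) f)"
  by (induction j) (simp_all add: T_invar)

lemma words_carrier: "words G S j \<subseteq> carrier G"
  by (induction j) (use SG in auto)

lemma words_mono: "j \<le> k \<Longrightarrow> words G S j \<subseteq> words G S k"
  by (induction k) (auto simp: le_Suc_eq)

lemma words_mult: "x \<in> words G S a \<Longrightarrow> y \<in> words G S b \<Longrightarrow> x \<otimes> y \<in> words G S (a + b)"
proof (induction a arbitrary: x)
  case 0
  then have "y \<in> carrier G" using words_carrier[of b] by auto
  then show ?case using 0 by simp
next
  case (Suc a)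
  from Suc.prems(1) consider "x \<in> words G S a" | s w where "s \<in> S" "w \<in> words G S a" "x = s \<otimes> w"
    by auto
  then show ?case
  proof cases
    case 1 then show ?thesis using Suc by auto
  next
    case 2
    have sG: "s \<in> carrier G" using 2(1) SG by auto
    have wG: "w \<in> carrier G" using 2(2) words_carrier[of a] by auto
    have yG: "y \<in> carrier G" using Suc.prems(2) words_carrier[of b] by auto
    have wy: "w \<otimes> y \<in> words G S (a + b)" using Suc.IH[OF 2(2) Suc.prems(2)] .
    have eq: "x \<otimes> y = s \<otimes> (w \<otimes> y)"
      using 2(3) m_assoc[OF sG wG yG] by simp
    show ?thesis unfolding eq using 2(1) wy by auto
  qed
qed

lemma words_inv: "x \<in> words G S a \<Longrightarrow> inv x \<in> words G S a"
proof (induction a arbitrary: x)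
  case 0 then show ?case by simp
next
  case (Suc a)
  from Suc.prems(1) consider "x \<in> words G S a" | s w where "s \<in> S" "w \<in> words G S a" "x = s \<otimes> w"
    by auto
  then show ?case
  proof cases
    case 1 then show ?thesis using Suc by auto
  next
    case 2
    have sG: "s \<in> carrier G" using 2(1) SG by auto
    have wG: "w \<in> carrier G" using 2(2) words_carrier[of a] by auto
    have is1: "inv s \<in> words G S 1" using 2 Ssym SG by force
    have iw: "inv w \<otimes> inv s \<in> words G S (a + 1)" by (rule words_mult[OF Suc.IH[OF 2(2)] is1])
    have eq: "inv x = inv w \<otimes> inv s"
      using 2(3) inv_mult_group[OF sG wG] by simp
    show ?thesis using iw unfolding eq by (metis Suc_eq_plus1)
  qed
qed

lemma words_gen: "x \<in> carrier G \<Longrightarrow> \<exists>j. x \<in> words G S j"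
proof -
  assume "x \<in> carrier G"
  then have "x \<in> generate G S" using gen by simp
  then show ?thesis
  proof (induction rule: generate.induct)
    case one then show ?case by (auto intro: exI[of _ 0])
  next
    case (incl h)
    then have "h \<otimes> \<one> \<in> words G S 1" by force
    moreover have "h \<in> carrier G" using incl SG by auto
    ultimately show ?case by (metis r_one)
  next
    case (inv h)
    then have "h \<otimes> \<one> \<in> words G S 1" by force
    moreover have "h \<in> carrier G" using inv SG by auto
    ultimately have "h \<in> words G S 1" by (metis r_one)
    then show ?case using words_inv by blast
  next
    case (eng h1 h2)
    then show ?case using words_mult by blast
  qed
qed

lemma words_finite_bound:
  "finite E \<Longrightarrow> E \<subseteq> carrier G \<Longrightarrow> \<exists>r. \<forall>e\<in>E. e \<in> words G S r"
proof (induction E rule: finite_induct)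
  case empty then show ?case by simp
next
  case (insert e E)
  then obtain r where r: "\<forall>e\<in>E. e \<in> words G S r" by auto
  from words_gen[of e] insert.prems obtain j where j: "e \<in> words G S j" by auto
  show ?case using r j words_mono[of r "max r j"] words_mono[of j "max r j"]
    by (intro exI[of _ "max r j"]) auto
qed

definition c where "c = 1 / (2 * real (card S))"

lemma c_pos: "0 < c" and c_half: "c \<le> 1/2"
  using cardS by (auto simp: c_def field_simps)

lemma Tpow_lower:
  assumes "\<And>x. x \<in> carrier G \<Longrightarrow> a \<le> f x" "g \<in> carrier G"
  shows "a \<le> (T ^^ j) f g"
  using assms(2)
proof (induction j arbitrary: g)
  case 0 then show ?case using assms by simp
next
  case (Suc j)
  then show ?case using T_lower[of a "(T ^^ j) f" g] by simp
qed

lemma T_ge: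
  assumes F0: "\<And>x. x \<in> carrier G \<Longrightarrow> 0 \<le> F x" and g: "g \<in> carrier G"
  shows "F g / 2 \<le> T F g" and "s \<in> S \<Longrightarrow> c * F (g \<otimes> s) \<le> T F g"
proof -
  have sum0: "0 \<le> (\<Sum>s\<in>S. F (g \<otimes> s))" using F0 g SG by (intro sum_nonneg) auto
  then show "F g / 2 \<le> T F g" unfolding walkT_def by simp
  assume s: "s \<in> S"
  have "F (g \<otimes> s) \<le> (\<Sum>s\<in>S. F (g \<otimes> s))"
    using F0 g SG s finS by (intro member_le_sum) auto
  then have "c * F (g \<otimes> s) \<le> (\<Sum>s\<in>S. F (g \<otimes> s)) / card S / 2"
    using cardS by (simp add: c_def field_simps)
  moreover have "0 \<le> F g" using F0 g by blast
  ultimately show "c * F (g \<otimes> s) \<le> T F g" unfolding walkT_def by (simp add: field_simps)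
qed

lemma Tpow_words:
  assumes f0: "\<And>x. x \<in> carrier G \<Longrightarrow> 0 \<le> f x"
  shows "g \<in> carrier G \<Longrightarrow> w \<in> words G S j \<Longrightarrow> c ^ j * f (g \<otimes> w) \<le> (T ^^ j) f g"
proof (induction j arbitrary: g w)
  case 0 then show ?case by simp
next
  case (Suc j)
  let ?F = "(T ^^ j) f"
  have nn: "\<And>x. x \<in> carrier G \<Longrightarrow> 0 \<le> ?F x" using Tpow_lower[of 0 f] f0 by blast
  have wG: "w \<in> carrier G" using Suc.prems(2) words_carrier[of "Suc j"] by auto
  have fw: "0 \<le> f (g \<otimes> w)" using f0 Suc.prems(1) wG by simp
  have cj: "0 \<le> c ^ j" using c_pos by simp
  from Suc.prems(2) consider "w \<in> words G S j" | s w' where "s \<in> S" "w' \<in> words G S j" "w = s \<otimes> w'"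
    by auto
  then show ?case
  proof cases
    case 1
    have "c ^ Suc j * f (g \<otimes> w) = c * (c ^ j * f (g \<otimes> w))" by simp
    also have "\<dots> \<le> (1/2) * (c ^ j * f (g \<otimes> w))"
      using c_half cj fw by (intro mult_right_mono) auto
    also have "\<dots> \<le> (1/2) * ?F g" using Suc.IH[OF Suc.prems(1) 1] by simp
    also have "\<dots> \<le> T ?F g" using T_ge(1)[OF nn Suc.prems(1)] by simp
    finally show ?thesis by simp
  next
    case 2
    have sG: "s \<in> carrier G" using 2(1) SG by auto
    have w'G: "w' \<in> carrier G" using 2(2) words_carrier[of j] by auto
    have gs: "g \<otimes> s \<in> carrier G" using Suc.prems(1) sG by simp
    have eq: "g \<otimes> w = g \<otimes> s \<otimes> w'" using 2(3) m_assoc[OF Suc.prems(1) sG w'G] by simp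
    have "c ^ Suc j * f (g \<otimes> w) = c * (c ^ j * f (g \<otimes> s \<otimes> w'))" using eq by simp
    also have "\<dots> \<le> c * ?F (g \<otimes> s)"
      using Suc.IH[OF gs 2(2)] c_pos by (intro mult_left_mono) auto
    also have "\<dots> \<le> T ?F g" using T_ge(2)[OF nn Suc.prems(1) 2(1)] .
    finally show ?thesis by simp
  qed
qed

end



context walk begin

lemma coverage:
  assumes N: "subgroup N G" and fin: "finite (rcosets N)"
  shows "\<exists>r\<ge>1. \<forall>g\<in>carrier G. \<forall>h\<in>carrier G. \<exists>w\<in>words G S r. g \<otimes> w \<in> N #> h"
proof -
  have NG: "N \<subseteq> carrier G" using subgroup.subset[OF N] .
  define rep where "rep C = (SOME x. x \<in> C)" for C :: "'a set"
  have rep: "rep C \<in> C" "C \<subseteq> carrier G" if "C \<in> rcosets N" for C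
  proof -
    from that obtain x where x: "x \<in> carrier G" "C = N #> x" unfolding RCOSETS_def by auto
    then have "x \<in> C" using rcos_self[OF x(1) N] by simp
    then show "rep C \<in> C" unfolding rep_def by (rule someI)
    show "C \<subseteq> carrier G" using x r_coset_subset_G[OF NG x(1)] by simp
  qed
  define E where "E = (\<lambda>(C, D). inv (rep C) \<otimes> rep D) ` ((rcosets N) \<times> (rcosets N))"
  have Ef: "finite E" unfolding E_def using fin by simp
  have EG: "E \<subseteq> carrier G"
  proof
    fix e assume "e \<in> E"
    then obtain C D where CD: "C \<in> rcosets N" "D \<in> rcosets N" "e = inv (rep C) \<otimes> rep D"
      unfolding E_def by auto
    have "rep C \<in> carrier G" using rep(1)[OF CD(1)] rep(2)[OF CD(1)] by auto
    moreover have "rep D \<in> carrier G" using rep(1)[OF CD(2)] rep(2)[OF CD(2)] by auto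
    ultimately show "e \<in> carrier G" using CD(3) by simp
  qed
  obtain r0 where r0: "\<forall>e\<in>E. e \<in> words G S r0" using words_finite_bound[OF Ef EG] by blast
  have r: "\<forall>e\<in>E. e \<in> words G S (Suc r0)" using r0 words_mono[of r0 "Suc r0"] by auto
  show ?thesis
  proof (intro exI[of _ "Suc r0"] conjI ballI)
    fix g h assume g: "g \<in> carrier G" and h: "h \<in> carrier G"
    let ?C = "N #> g" and ?D = "N #> h"
    have C: "?C \<in> rcosets N" and D: "?D \<in> rcosets N" using rcosetsI[OF NG] g h by auto
    let ?a = "rep ?C" and ?b = "rep ?D"
    have a: "?a \<in> N #> g" using rep(1)[OF C] .
    have b: "?b \<in> N #> h" using rep(1)[OF D] .
    have aG: "?a \<in> carrier G" using a r_coset_subset_G[OF NG g] by auto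
    have bG: "?b \<in> carrier G" using b r_coset_subset_G[OF NG h] by auto
    have na: "?a \<otimes> inv g \<in> N" using subgroup.rcos_module_imp[OF N is_group g a] .
    have nb: "?b \<otimes> inv h \<in> N" using subgroup.rcos_module_imp[OF N is_group h b] .
    have wE: "inv ?a \<otimes> ?b \<in> E" unfolding E_def using C D by (intro image_eqI[of _ _ "(?C, ?D)"]) auto
    have wG: "inv ?a \<otimes> ?b \<in> carrier G" using aG bG by simp
    have "inv (?a \<otimes> inv g) \<otimes> (?b \<otimes> inv h) \<in> N"
      using na nb N by (simp add: subgroup.m_closed subgroup.m_inv_closed)
    moreover have "inv (?a \<otimes> inv g) \<otimes> (?b \<otimes> inv h) = g \<otimes> (inv ?a \<otimes> ?b) \<otimes> inv h"
      using aG bG g h by (simp add: inv_mult_group m_assoc)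
    ultimately have "g \<otimes> (inv ?a \<otimes> ?b) \<in> N #> h"
      using subgroup.rcos_module[OF N is_group h] g wG by simp
    then show "\<exists>w\<in>words G S (Suc r0). g \<otimes> w \<in> N #> h" using wE r by blast
  qed simp
qed

lemma invar_coset:
  assumes "invar N f" "y \<in> N #> h" "h \<in> carrier G"
  shows "f y = f h"
proof -
  from assms(2) obtain n where "n \<in> N" "y = n \<otimes> h" unfolding r_coset_def by auto
  then show ?thesis using assms(1,3) unfolding invar_def by simp
qed

lemma doeblin:
  assumes N: "subgroup N G"
    and cov: "\<forall>g\<in>carrier G. \<forall>h\<in>carrier G. \<exists>w\<in>words G S r. g \<otimes> w \<in> N #> h"
    and inv: "invar N f"
    and bd: "\<And>x. x \<in> carrier G \<Longrightarrow> a \<le> f x \<and> f x \<le> a + d"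
  shows "\<exists>a'. \<forall>x\<in>carrier G. a' \<le> (T ^^ r) f x \<and> (T ^^ r) f x \<le> a' + (1 - c ^ r) * d"
proof (intro exI[of _ "a + c ^ r * (f \<one> - a)"] ballI conjI)
  fix x assume x: "x \<in> carrier G"
  obtain w where w: "w \<in> words G S r" "x \<otimes> w \<in> N #> \<one>" using cov x by blast
  have fw: "f (x \<otimes> w) = f \<one>" using invar_coset[OF inv w(2)] by simp
  have lo: "c ^ r * (f (x \<otimes> w) + (- a)) \<le> (T ^^ r) (\<lambda>y. f y + (- a)) x"
    using Tpow_words[of "\<lambda>y. f y + (- a)", OF _ x w(1)] bd by force
  moreover have "(T ^^ r) (\<lambda>y. f y + (- a)) x = (T ^^ r) f x + (- a)" by (simp only: Tpow_shift)
  ultimately show "a + c ^ r * (f \<one> - a) \<le> (T ^^ r) f x"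
    using fw by simp
  have up: "c ^ r * ((a + d) - f (x \<otimes> w)) \<le> (T ^^ r) (\<lambda>y. (a + d) - f y) x"
    using Tpow_words[of "\<lambda>y. (a + d) - f y", OF _ x w(1)] bd by force
  moreover have "(T ^^ r) (\<lambda>y. (a + d) - f y) x = (a + d) - (T ^^ r) f x" by (simp only: Tpow_neg)
  ultimately have "c ^ r * ((a + d) - f \<one>) \<le> (a + d) - (T ^^ r) f x"
    using fw by simp
  then show "(T ^^ r) f x \<le> a + c ^ r * (f \<one> - a) + (1 - c ^ r) * d"
    by (simp add: algebra_simps)
qed

lemma doeblin_iter:
  assumes N: "subgroup N G"
    and cov: "\<forall>g\<in>carrier G. \<forall>h\<in>carrier G. \<exists>w\<in>words G S r. g \<otimes> w \<in> N #> h"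
    and inv: "invar N f"
    and bd: "\<And>x. x \<in> carrier G \<Longrightarrow> 0 \<le> f x \<and> f x \<le> 1"
  shows "\<exists>a. \<forall>x\<in>carrier G. a \<le> (T ^^ (k * r)) f x \<and> (T ^^ (k * r)) f x \<le> a + (1 - c ^ r) ^ k"
proof (induction k)
  case 0 then show ?case using bd by (intro exI[of _ 0]) auto
next
  case (Suc k)
  then obtain a where a: "\<forall>x\<in>carrier G. a \<le> (T ^^ (k * r)) f x \<and> (T ^^ (k * r)) f x \<le> a + (1 - c ^ r) ^ k"
    by blast
  have "\<exists>a'. \<forall>x\<in>carrier G. a' \<le> (T ^^ r) ((T ^^ (k * r)) f) x \<and>
      (T ^^ r) ((T ^^ (k * r)) f) x \<le> a' + (1 - c ^ r) * (1 - c ^ r) ^ k"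
    by (rule doeblin[OF N cov Tpow_invar[OF N inv]]) (use a in blast)
  moreover have "(T ^^ (Suc k * r)) f = (T ^^ r) ((T ^^ (k * r)) f)"
    by (simp add: funpow_add)
  ultimately show ?case by simp
qed

lemma doeblin_all:
  assumes N: "subgroup N G" and r1: "r \<ge> 1"
    and cov: "\<forall>g\<in>carrier G. \<forall>h\<in>carrier G. \<exists>w\<in>words G S r. g \<otimes> w \<in> N #> h"
    and inv: "invar N f"
    and bd: "\<And>x. x \<in> carrier G \<Longrightarrow> 0 \<le> f x \<and> f x \<le> 1"
  shows "\<exists>a. \<forall>x\<in>carrier G. a \<le> (T ^^ n) f x \<and> (T ^^ n) f x \<le> a + (1 - c ^ r) ^ (n div r)"
proof -
  obtain a where a: "\<forall>x\<in>carrier G. a \<le> (T ^^ (n div r * r)) f x \<and>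
      (T ^^ (n div r * r)) f x \<le> a + (1 - c ^ r) ^ (n div r)"
    using doeblin_iter[OF N cov inv bd, of "n div r"] by blast
  have eq: "(T ^^ n) f = (T ^^ (n mod r)) ((T ^^ (n div r * r)) f)"
    by (metis funpow_add comp_apply mod_div_decomp add.commute)
  show ?thesis unfolding eq using Tpow_bounds a by (intro exI[of _ a]) blast
qed

lemma coset_absorb:
  assumes N: "subgroup N G" and n: "n \<in> N" and x: "x \<in> carrier G"
  shows "N #> (n \<otimes> x) = N #> x"
proof -
  have NG: "N \<subseteq> carrier G" using subgroup.subset[OF N] .
  have nG: "n \<in> carrier G" using subgroup.mem_carrier[OF N n] .
  have "N #> (n \<otimes> x) = (N #> n) #> x" using coset_mult_assoc[OF NG nG x] by simp
  also have "N #> n = N" using coset_join2[OF nG N n] .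
  finally show ?thesis .
qed

lemma walk_T:
  assumes N: "subgroup N G"
  shows "x \<in> carrier G \<Longrightarrow> measure_pmf.prob (lazy_walk G S n) (N #> x)
     = (T ^^ n) (\<lambda>h. measure_pmf.prob (lazy_walk G S 0) (N #> h)) x"
proof (induction n arbitrary: x)
  case 0 then show ?case by simp
next
  case (Suc n)
  have "measure_pmf.prob (lazy_walk G S (Suc n)) (N #> x)
      = T (\<lambda>h. measure_pmf.prob (lazy_walk G S n) (N #> h)) x"
    using walk_rec[OF N Suc.prems] .
  also have "\<dots> = T ((T ^^ n) (\<lambda>h. measure_pmf.prob (lazy_walk G S 0) (N #> h))) x"
    by (rule T_cong[OF _ Suc.prems]) (rule Suc.IH)
  finally show ?case by simp
qed

lemma cosets_sum:
  assumes N: "subgroup N G" and fin: "finite (rcosets N)"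
  shows "(\<Sum>C\<in>rcosets N. measure_pmf.prob (lazy_walk G S n) C) = 1"
proof -
  have "(\<Sum>C\<in>rcosets N. measure_pmf.prob (lazy_walk G S n) C)
      = measure_pmf.prob (lazy_walk G S n) (\<Union>C\<in>rcosets N. C)"
    using fin rcos_disjoint[OF N]
    by (intro measure_pmf.finite_measure_finite_Union[symmetric])
       (auto simp: disjoint_family_on_def pairwise_def disjnt_def)
  also have "(\<Union>C\<in>rcosets N. C) = carrier G" using rcosets_part_G[OF N] by simp
  also have "measure_pmf.prob (lazy_walk G S n) (carrier G) = 1"
    using walk_support[of n] by (subst measure_pmf.prob_eq_1) (auto simp: AE_measure_pmf_iff)
  finally show ?thesis .
qed

lemma div_at_top: "(r::nat) \<ge> 1 \<Longrightarrow> filterlim (\<lambda>n. n div r) at_top sequentially"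
  unfolding filterlim_at_top
proof (intro allI)
  fix Z assume r: "r \<ge> 1"
  show "eventually (\<lambda>n. Z \<le> n div r) sequentially"
    unfolding eventually_sequentially
  proof (intro exI[of _ "Z * r"] allI impI)
    fix n assume "Z * r \<le> n"
    then have "Z * r div r \<le> n div r" by (rule div_le_mono)
    then show "Z \<le> n div r" using r by simp
  qed
qed

lemma equidist:
  assumes N: "subgroup N G" and fin: "finite (rcosets N)"
  shows "(\<lambda>n. measure_pmf.prob (lazy_walk G S n) N) \<longlonglongrightarrow> 1 / card (rcosets N)"
proof -
  have NG: "N \<subseteq> carrier G" using subgroup.subset[OF N] .
  obtain r where r1: "r \<ge> 1" and cov: "\<forall>g\<in>carrier G. \<forall>h\<in>carrier G. \<exists>w\<in>words G S r. g \<otimes> w \<in> N #> h"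
    using coverage[OF N fin] by blast
  define f0 where "f0 = (\<lambda>h. measure_pmf.prob (lazy_walk G S 0) (N #> h))"
  have inv0: "invar N f0" unfolding invar_def f0_def using coset_absorb[OF N] by simp
  have bd0: "0 \<le> f0 x \<and> f0 x \<le> 1" for x unfolding f0_def by simp
  define m where "m = card (rcosets N)"
  have m0: "m > 0" unfolding m_def using fin rcosetsI[OF NG one_closed] card_gt_0_iff by blast
  define q where "q = 1 - c ^ r"
  have q: "0 \<le> q" "q < 1" unfolding q_def using c_pos c_half
    by (auto simp: power_le_one)
  have bound: "\<bar>measure_pmf.prob (lazy_walk G S n) N - 1 / m\<bar> \<le> q ^ (n div r)" for n
  proof -
    obtain a where a: "\<forall>x\<in>carrier G. a \<le> (T ^^ n) f0 x \<and> (T ^^ n) f0 x \<le> a + q ^ (n div r)"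
      using doeblin_all[OF N r1 cov inv0 bd0] unfolding q_def by blast
    let ?P = "measure_pmf.prob (lazy_walk G S n)"
    have pc: "a \<le> ?P C \<and> ?P C \<le> a + q ^ (n div r)" if "C \<in> rcosets N" for C
    proof -
      from that obtain x where x: "x \<in> carrier G" "C = N #> x" unfolding RCOSETS_def by auto
      then show ?thesis using a walk_T[OF N x(1), of n] unfolding f0_def by simp
    qed
    have s1: "(\<Sum>C\<in>rcosets N. ?P C) = 1" using cosets_sum[OF N fin] .
    have "(\<Sum>C\<in>rcosets N. a) \<le> (\<Sum>C\<in>rcosets N. ?P C)" using pc by (intro sum_mono) auto
    then have lo: "m * a \<le> 1" using s1 unfolding m_def by simp
    have "(\<Sum>C\<in>rcosets N. ?P C) \<le> (\<Sum>C\<in>rcosets N. a + q ^ (n div r))" using pc by (intro sum_mono) auto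
    then have hi: "1 \<le> m * (a + q ^ (n div r))" using s1 unfolding m_def by simp
    have "?P N = ?P (N #> \<one>)" using NG by simp
    also have "\<dots> = (T ^^ n) f0 \<one>" using walk_T[OF N one_closed, of n] unfolding f0_def by simp
    finally have pn: "a \<le> ?P N \<and> ?P N \<le> a + q ^ (n div r)" using a by simp
    have "a \<le> 1 / m" using lo m0 by (simp add: field_simps)
    moreover have "1 / m \<le> a + q ^ (n div r)" using hi m0 by (simp add: field_simps)
    ultimately show ?thesis using pn by linarith
  qed
  have "(\<lambda>k. q ^ k) \<longlonglongrightarrow> 0" using q by (intro LIMSEQ_power_zero) auto
  then have lim: "(\<lambda>n. q ^ (n div r)) \<longlonglongrightarrow> 0"
    using filterlim_compose div_at_top[OF r1] by blast
  have "(\<lambda>n. measure_pmf.prob (lazy_walk G S n) N - 1 / m) \<longlonglongrightarrow> 0"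
    by (rule Lim_null_comparison[OF _ lim]) (use bound in simp)
  then have "(\<lambda>n. measure_pmf.prob (lazy_walk G S n) N - 1 / m + 1 / m) \<longlonglongrightarrow> 0 + 1 / m"
    by (intro tendsto_add tendsto_const)
  then show ?thesis unfolding m_def by simp
qed

end



context group begin

lemma rcosets_carrier: "rcosets (carrier G) = {carrier G}"
proof -
  have "carrier G #> x = carrier G" if "x \<in> carrier G" for x
    using coset_join2[OF that subgroup_self that] .
  then show ?thesis unfolding RCOSETS_def by auto
qed

lemma fin_index_carrier: "fin_index_normal G (carrier G)" "grp_index G (carrier G) = 1"
  using normal_self rcosets_carrier by (auto simp: fin_index_normal_def grp_index_def)

lemma Lambda_facts:
  assumes "k \<ge> 1"
  shows "Lambda G k \<subseteq> carrier G" "subgroup (Lambda G k) G"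
proof -
  let ?F = "{N. fin_index_normal G N \<and> grp_index G N \<le> k}"
  have cF: "carrier G \<in> ?F" using fin_index_carrier assms by auto
  then show "Lambda G k \<subseteq> carrier G" unfolding Lambda_def by auto
  have "subgroup H G" if "H \<in> ?F" for H
    using that normal_imp_subgroup by (auto simp: fin_index_normal_def)
  then show "subgroup (Lambda G k) G" unfolding Lambda_def
    using subgroups_Inter[of ?F] cF by blast
qed

lemma depth_gt:
  assumes rf: "residually_finite G" and k: "k \<ge> 1" and x: "x \<in> Lambda G k" and x1: "x \<noteq> \<one>"
  shows "k < depth G x"
proof (rule ccontr)
  assume "\<not> k < depth G x"
  then have dk: "depth G x \<le> k" by simp
  have xG: "x \<in> carrier G" using Lambda_facts(1)[OF k] x by blast
  obtain N where N: "fin_index_normal G N" "x \<notin> N" using rf xG x1 unfolding residually_finite_def by blast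
  then have ex: "\<exists>m. \<exists>N. fin_index_normal G N \<and> x \<notin> N \<and> grp_index G N = m" by blast
  have "\<exists>N. fin_index_normal G N \<and> x \<notin> N \<and> grp_index G N = depth G x"
    unfolding depth_def using x1 LeastI_ex[OF ex] by simp
  then obtain N0 where N0: "fin_index_normal G N0" "x \<notin> N0" "grp_index G N0 = depth G x" by blast
  then have "N0 \<in> {N. fin_index_normal G N \<and> grp_index G N \<le> k}" using dk by simp
  then have "Lambda G k \<subseteq> N0" unfolding Lambda_def by blast
  then show False using x N0(2) by blast
qed

lemma Inter_coset:
  assumes F: "F \<noteq> {}" "\<And>H. H \<in> F \<Longrightarrow> subgroup H G" and x: "x \<in> carrier G"
  shows "(\<Inter>F) #> x = (\<Inter>H\<in>F. H #> x)"
proof -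
  have sub: "subgroup (\<Inter>F) G" using subgroups_Inter F by blast
  have sG: "(\<Inter>F) #> x \<subseteq> carrier G"
    using r_coset_subset_G[OF subgroup.subset[OF sub] x] .
  obtain H0 where H0: "H0 \<in> F" using F by blast
  have s2: "(\<Inter>H\<in>F. H #> x) \<subseteq> carrier G"
    using r_coset_subset_G[OF subgroup.subset[OF F(2)[OF H0]] x] H0 by blast
  show ?thesis
  proof (intro equalityI subsetI)
    fix y assume y: "y \<in> (\<Inter>F) #> x"
    then have yG: "y \<in> carrier G" using sG by blast
    have "y \<otimes> inv x \<in> \<Inter>F" using subgroup.rcos_module[OF sub is_group x yG] y by simp
    then show "y \<in> (\<Inter>H\<in>F. H #> x)"
      using subgroup.rcos_module[OF F(2) is_group x yG] by blast
  next
    fix y assume y: "y \<in> (\<Inter>H\<in>F. H #> x)"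
    then have yG: "y \<in> carrier G" using s2 by blast
    have "y \<otimes> inv x \<in> H" if "H \<in> F" for H
      using subgroup.rcos_module[OF F(2)[OF that] is_group x yG] y that by blast
    then have "y \<otimes> inv x \<in> \<Inter>F" by blast
    then show "y \<in> (\<Inter>F) #> x" using subgroup.rcos_module[OF sub is_group x yG] by simp
  qed
qed

lemma Inter_fin_index:
  assumes fin: "finite F" and ne: "F \<noteq> {}"
    and FH: "\<And>H. H \<in> F \<Longrightarrow> subgroup H G \<and> finite (rcosets H)"
  shows "subgroup (\<Inter>F) G" "finite (rcosets (\<Inter>F))"
proof -
  show "subgroup (\<Inter>F) G" using subgroups_Inter FH ne by blast
  have "rcosets (\<Inter>F) \<subseteq> (\<lambda>\<phi>. \<Inter>H\<in>F. \<phi> H) ` (Pi\<^sub>E F (\<lambda>H. rcosets H))"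
  proof
    fix C assume "C \<in> rcosets (\<Inter>F)"
    then obtain x where x: "x \<in> carrier G" "C = (\<Inter>F) #> x" unfolding RCOSETS_def by auto
    have "C = (\<lambda>\<phi>. \<Inter>H\<in>F. \<phi> H) (restrict (\<lambda>H. H #> x) F)"
      using Inter_coset[OF ne _ x(1)] FH x(2) by simp
    moreover have "H #> x \<in> rcosets H" if "H \<in> F" for H
      using rcosetsI[OF subgroup.subset[OF conjunct1[OF FH[OF that]]] x(1)] .
    then have "restrict (\<lambda>H. H #> x) F \<in> Pi\<^sub>E F (\<lambda>H. rcosets H)" by auto
    ultimately show "C \<in> (\<lambda>\<phi>. \<Inter>H\<in>F. \<phi> H) ` (Pi\<^sub>E F (\<lambda>H. rcosets H))" by blast
  qed
  moreover have "finite (Pi\<^sub>E F (\<lambda>H. rcosets H))" using fin FH by (intro finite_PiE) auto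
  ultimately show "finite (rcosets (\<Inter>F))" using finite_subset by blast
qed

lemma large_index:
  assumes rf: "residually_finite G" and inf: "infinite (carrier G)"
  shows "\<exists>N. subgroup N G \<and> finite (rcosets N) \<and> card (rcosets N) \<ge> M"
proof -
  obtain A where A: "finite A" "card A = M" "A \<subseteq> carrier G"
    using infinite_arbitrarily_large[OF inf] by blast
  define P where "P = {p \<in> A \<times> A. fst p \<noteq> snd p}"
  have "\<forall>p\<in>P. \<exists>N. fin_index_normal G N \<and> fst p \<otimes> inv (snd p) \<notin> N"
  proof
    fix p assume p: "p \<in> P"
    then have G: "fst p \<in> carrier G" "snd p \<in> carrier G" and ne: "fst p \<noteq> snd p"
      using A unfolding P_def by auto
    have "fst p \<otimes> inv (snd p) \<noteq> \<one>"
    proof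
      assume "fst p \<otimes> inv (snd p) = \<one>"
      then have "fst p = snd p" using G by (metis inv_equality inv_inv inv_closed r_inv_ex
            group.inv_comm is_group)
      then show False using ne by simp
    qed
    moreover have "fst p \<otimes> inv (snd p) \<in> carrier G" using G by simp
    ultimately show "\<exists>N. fin_index_normal G N \<and> fst p \<otimes> inv (snd p) \<notin> N"
      using rf unfolding residually_finite_def by blast
  qed
  then obtain Mf where Mf: "\<forall>p\<in>P. fin_index_normal G (Mf p) \<and> fst p \<otimes> inv (snd p) \<notin> Mf p"
    by metis
  define F where "F = insert (carrier G) (Mf ` P)"
  have Pf: "finite P" unfolding P_def using A by simp
  have FH: "subgroup H G \<and> finite (rcosets H)" if "H \<in> F" for H
    using that Mf fin_index_carrier normal_imp_subgroup unfolding F_def fin_index_normal_def by auto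
  have Ff: "finite F" "F \<noteq> {}" unfolding F_def using Pf by auto
  define N where "N = \<Inter>F"
  have N: "subgroup N G" "finite (rcosets N)" unfolding N_def using Inter_fin_index[OF Ff FH] by auto
  have NG: "N \<subseteq> carrier G" using subgroup.subset[OF N(1)] .
  have inj: "inj_on (\<lambda>x. N #> x) A"
  proof (rule inj_onI)
    fix x y assume x: "x \<in> A" and y: "y \<in> A" and eq: "N #> x = N #> y"
    show "x = y"
    proof (rule ccontr)
      assume ne: "x \<noteq> y"
      have xG: "x \<in> carrier G" and yG: "y \<in> carrier G" using x y A by auto
      have "x \<in> N #> y" using rcos_self[OF xG N(1)] eq by simp
      then have "x \<otimes> inv y \<in> N" using subgroup.rcos_module[OF N(1) is_group yG xG] by simp
      moreover have "(x, y) \<in> P" using x y ne unfolding P_def by simp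
      then have "Mf (x, y) \<in> F" unfolding F_def by blast
      ultimately have "x \<otimes> inv y \<in> Mf (x, y)" unfolding N_def by blast
      then show False using Mf \<open>(x, y) \<in> P\<close> by auto
    qed
  qed
  have "(\<lambda>x. N #> x) ` A \<subseteq> rcosets N" using rcosetsI[OF NG] A by auto
  then have "card ((\<lambda>x. N #> x) ` A) \<le> card (rcosets N)" using N(2) by (rule card_mono[rotated])
  then have "M \<le> card (rcosets N)" using card_image[OF inj] A by simp
  then show ?thesis using N by blast
qed

end

context walk begin

lemma prob_one_small:
  assumes rf: "residually_finite G" and inf: "infinite (carrier G)" and e: "e > 0"
  shows "eventually (\<lambda>n. measure_pmf.prob (lazy_walk G S n) {\<one>} < e) sequentially"
proof -
  obtain M :: nat where M: "2 / e < M" using reals_Archimedean2 by blast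
  obtain N where N: "subgroup N G" "finite (rcosets N)" "card (rcosets N) \<ge> M"
    using large_index[OF rf inf] by blast
  have Mpos: "0 < real M" using M e by (smt (verit) divide_pos_pos)
  have "1 / real (card (rcosets N)) \<le> 1 / real M" using N(3) Mpos
    by (intro divide_left_mono) auto
  also have "1 / real M < e / 2" using M e Mpos by (simp add: field_simps)
  finally have small: "1 / real (card (rcosets N)) < e / 2" .
  have "eventually (\<lambda>n. measure_pmf.prob (lazy_walk G S n) N < e / 2) sequentially"
    using order_tendstoD(2)[OF equidist[OF N(1,2)] small] .
  then show ?thesis
  proof (rule eventually_mono)
    fix n assume "measure_pmf.prob (lazy_walk G S n) N < e / 2"
    moreover have "measure_pmf.prob (lazy_walk G S n) {\<one>} \<le> measure_pmf.prob (lazy_walk G S n) N"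
      using subgroup.one_closed[OF N(1)] by (intro measure_pmf.finite_measure_mono) auto
    ultimately show "measure_pmf.prob (lazy_walk G S n) {\<one>} < e" using e by simp
  qed
qed

lemma depth_expect_ge:
  assumes rf: "residually_finite G"
  shows "(\<Sum>k<K. measure_pmf.prob (lazy_walk G S n) (Lambda G (k + 2) - {\<one>}))
      \<le> measure_pmf.expectation (lazy_walk G S n) (\<lambda>x. real (depth G x))"
proof -
  let ?p = "lazy_walk G S n"
  let ?F = "set_pmf ?p"
  have F: "finite ?F" using walk_support by auto
  have pw: "(\<Sum>k<K. indicator (Lambda G (k + 2) - {\<one>}) x) \<le> real (depth G x)" for x
  proof -
    have sub: "{..<K} \<inter> {k. x \<in> Lambda G (k + 2) - {\<one>}} \<subseteq> {..<depth G x}"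
      using depth_gt[OF rf] by fastforce
    have "(\<Sum>k<K. indicator (Lambda G (k + 2) - {\<one>}) x :: real)
        = real (card ({..<K} \<inter> {k. x \<in> Lambda G (k + 2) - {\<one>}}))"
      by (simp add: indicator_def of_bool_def[symmetric])
    also have "\<dots> \<le> real (card {..<depth G x})"
      using card_mono[OF _ sub] by simp
    finally show ?thesis by simp
  qed
  have "(\<Sum>k<K. measure_pmf.prob ?p (Lambda G (k + 2) - {\<one>}))
      = (\<Sum>k<K. \<Sum>x\<in>?F. pmf ?p x * indicator (Lambda G (k + 2) - {\<one>}) x)"
    using prob_finite_sum[OF F order_refl] by simp
  also have "\<dots> = (\<Sum>x\<in>?F. pmf ?p x * (\<Sum>k<K. indicator (Lambda G (k + 2) - {\<one>}) x))"
    unfolding sum_distrib_left by (rule sum.swap)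
  also have "\<dots> \<le> (\<Sum>x\<in>?F. pmf ?p x * real (depth G x))"
    using pw by (intro sum_mono mult_left_mono) auto
  also have "\<dots> = measure_pmf.expectation ?p (\<lambda>x. real (depth G x))"
    using expectation_finite_sum[OF F order_refl] by simp
  finally show ?thesis .
qed

end

theorem corollary4p2:
  fixes G :: "('a, 'b) monoid_scheme" and S :: "'a set"
  assumes "group G"
    and "infinite (carrier G)"
    and "residually_finite G"
    and "finite S" and "S \<subseteq> carrier G"
    and "\<forall>s \<in> S. inv\<^bsub>G\<^esub> s \<in> S"
    and "generate G S = carrier G"
    and "\<not> summable (\<lambda>k. 1 / real (grp_index G (Lambda G (k + 2))))"
  shows "filterlim (\<lambda>n. measure_pmf.expectation (lazy_walk G S n) (\<lambda>x. real (depth G x)))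
           at_top sequentially"
proof -
  interpret group G by fact
  have Sne: "S \<noteq> {}"
  proof
    assume "S = {}"
    then have "generate G S = {\<one>\<^bsub>G\<^esub>}" using generate_empty by simp
    then show False using assms(2,7) by simp
  qed
  interpret W: walk G S using assms Sne by unfold_locales auto
  define a where "a k = 1 / real (grp_index G (Lambda G (k + 2)))" for k
  have a0: "0 \<le> a k" for k unfolding a_def by simp
  show ?thesis unfolding filterlim_at_top
  proof (intro allI)
    fix B :: real
    have "\<exists>K. B + 1 < (\<Sum>k<K. a k)"
    proof (rule ccontr)
      assume "\<not> ?thesis"
      then have "\<And>K. (\<Sum>k<K. a k) \<le> B + 1" by (simp add: not_less)
      then have "summable a" using a0 by (intro summableI_nonneg_bounded)
      then show False using assms(8) unfolding a_def by simp
    qed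
    then obtain K where K: "B + 1 < (\<Sum>k<K. a k)" by blast
    define d where "d = 1 / (3 * (real K + 1))"
    have d: "d > 0" unfolding d_def by simp
    let ?P = "\<lambda>n A. measure_pmf.prob (lazy_walk G S n) A"
    have ev1: "\<forall>k\<in>{..<K}. eventually (\<lambda>n. a k - d < ?P n (Lambda G (k + 2))) sequentially"
    proof
      fix k assume "k \<in> {..<K}"
      have k1: "k + 2 \<ge> 1" by simp
      show "eventually (\<lambda>n. a k - d < ?P n (Lambda G (k + 2))) sequentially"
      proof (cases "finite (rcosets\<^bsub>G\<^esub> (Lambda G (k + 2)))")
        case True
        have "a k = 1 / real (card (rcosets\<^bsub>G\<^esub> (Lambda G (k + 2))))" unfolding a_def grp_index_def ..
        then show ?thesis using order_tendstoD(1)[OF W.equidist[OF Lambda_facts(2)[OF k1] True], of "a k - d"] d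
          by simp
      next
        case False
        then have "a k = 0" unfolding a_def grp_index_def by simp
        then show ?thesis using d by (intro always_eventually allI) (smt (verit) measure_nonneg)
      qed
    qed
    have ev: "eventually (\<lambda>n. (\<forall>k\<in>{..<K}. a k - d < ?P n (Lambda G (k + 2))) \<and> ?P n {\<one>\<^bsub>G\<^esub>} < d) sequentially"
      using eventually_ball_finite[OF _ ev1] W.prob_one_small[OF assms(3,2) d] by (intro eventually_conj) auto
    show "eventually (\<lambda>n. B \<le> measure_pmf.expectation (lazy_walk G S n) (\<lambda>x. real (depth G x))) sequentially"
      using ev
    proof (rule eventually_mono)
      fix n assume H: "(\<forall>k\<in>{..<K}. a k - d < ?P n (Lambda G (k + 2))) \<and> ?P n {\<one>\<^bsub>G\<^esub>} < d"
      have "?P n (Lambda G (k + 2)) - ?P n {\<one>\<^bsub>G\<^esub>} \<le> ?P n (Lambda G (k + 2) - {\<one>\<^bsub>G\<^esub>})" for k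
      proof -
        have "?P n (Lambda G (k + 2) - {\<one>\<^bsub>G\<^esub>}) = ?P n (Lambda G (k + 2)) - ?P n (Lambda G (k + 2) \<inter> {\<one>\<^bsub>G\<^esub>})"
          by (rule measure_pmf.finite_measure_Diff') auto
        moreover have "?P n (Lambda G (k + 2) \<inter> {\<one>\<^bsub>G\<^esub>}) \<le> ?P n {\<one>\<^bsub>G\<^esub>}"
          by (rule measure_pmf.finite_measure_mono) auto
        ultimately show ?thesis by simp
      qed
      then have "(\<Sum>k<K. a k - 2 * d) \<le> (\<Sum>k<K. ?P n (Lambda G (k + 2) - {\<one>\<^bsub>G\<^esub>}))"
        using H by (intro sum_mono) (smt (verit) lessThan_iff)
      also have "\<dots> \<le> measure_pmf.expectation (lazy_walk G S n) (\<lambda>x. real (depth G x))"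
        by (rule W.depth_expect_ge[OF assms(3)])
      finally have "(\<Sum>k<K. a k) - 2 * d * K \<le> measure_pmf.expectation (lazy_walk G S n) (\<lambda>x. real (depth G x))"
        by (simp add: sum_subtractf mult.commute)
      moreover have "2 * d * K \<le> 1" unfolding d_def by (simp add: field_simps)
      ultimately show "B \<le> measure_pmf.expectation (lazy_walk G S n) (\<lambda>x. real (depth G x))"
        using K by linarith
    qed
  qed
qed


end
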